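(* Let $\sigma$ be a monotone function on $(0,\infty)$ with $\sigma(y)\nearrow\infty$, and let $F$ be an entire function with $|F(x+iy)|\le e^{|y|\sigma(|y|)}$ for all $x+iy\in\mathbb{C}$. If $F$ has $n$ zeros on an interval $[a,b]$, then $$|F(x)|\le (b-a)^n\min_{y>0}\frac{e^{y\sigma(y)}}{y^n}\quad\text{for every } x\in[a,b].$$ *)

theory Defs
  imports "HOL-Complex_Analysis.Complex_Analysis"
begin

text \<open>An entire function F has (at least) n zeros on a set S of reals, counted with
multiplicity: there are real points x_1,...,x_n in S (repetitions allowed) such that
F factors as (z - x_1)...(z - x_n) G(z) with G entire.\<close>
definition has_n_zeros_on :: "(complex \<Rightarrow> complex) \<Rightarrow> nat \<Rightarrow> real set \<Rightarrow> bool" where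
  "has_n_zeros_on F n S \<longleftrightarrow>
     (\<exists>xs G. length xs = n \<and> set xs \<subseteq> S \<and> G holomorphic_on UNIV \<and>
        (\<forall>z. F z = (\<Prod>x\<leftarrow>xs. z - complex_of_real x) * G z))"

end

theory Submission
  imports Defs
begin

lemma prod_norm_upper:
  fixes z :: complex
  assumes "\<And>x. x \<in> set xs \<Longrightarrow> norm (z - complex_of_real x) \<le> c"
  shows "norm (\<Prod>x\<leftarrow>xs. z - complex_of_real x) \<le> c ^ length xs"
  using assms
proof (induction xs)
  case Nil then show ?case by simp
next
  case (Cons a xs)
  have c0: "0 \<le> c" using Cons.prems[of a] by (meson list.set_intros(1) norm_ge_zero order_trans)
  have "norm (\<Prod>x\<leftarrow>a#xs. z - complex_of_real x)
      = norm (z - complex_of_real a) * norm (\<Prod>x\<leftarrow>xs. z - complex_of_real x)"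
    by (simp add: norm_mult)
  also have "\<dots> \<le> c * c ^ length xs"
    by (rule mult_mono) (use Cons c0 in auto)
  finally show ?case by simp
qed

lemma prod_norm_lower:
  fixes z :: complex
  assumes "\<And>x. x \<in> set xs \<Longrightarrow> norm (z - complex_of_real x) \<ge> c" and "0 \<le> c"
  shows "norm (\<Prod>x\<leftarrow>xs. z - complex_of_real x) \<ge> c ^ length xs"
  using assms
proof (induction xs)
  case Nil then show ?case by simp
next
  case (Cons a xs)
  have "c * c ^ length xs \<le> norm (z - complex_of_real a) * norm (\<Prod>x\<leftarrow>xs. z - complex_of_real x)"
    by (rule mult_mono) (use Cons in auto)
  also have "\<dots> = norm (\<Prod>x\<leftarrow>a#xs. z - complex_of_real x)"
    by (simp add: norm_mult)
  finally show ?case by simp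
qed

lemma strip_max_eps:
  fixes G :: "complex \<Rightarrow> complex"
  assumes G: "G holomorphic_on UNIV" and y: "y > 0"
   and K: "\<And>z. \<bar>Im z\<bar> \<le> y \<Longrightarrow> \<bar>Re z - x0\<bar> \<ge> R0 \<Longrightarrow> norm (G z) \<le> K"
   and M: "\<And>z. \<bar>Im z\<bar> = y \<Longrightarrow> norm (G z) \<le> M"
   and M0: "M > 0"
   and eps: "\<epsilon> > 0"
  shows "norm (G (complex_of_real x0)) \<le> M * exp (\<epsilon> * y^2)"
proof -
  define H where "H z = G z * exp (- (complex_of_real \<epsilon>) * (z - complex_of_real x0)^2)" for z
  have nH: "norm (H z) = norm (G z) * exp (\<epsilon> * ((Im z)^2 - (Re z - x0)^2))" for z
  proof -
    have "Re (- (complex_of_real \<epsilon>) * (z - complex_of_real x0)^2) = \<epsilon> * ((Im z)^2 - (Re z - x0)^2)"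
      by (simp add: power2_eq_square algebra_simps)
    then show ?thesis by (simp add: H_def norm_mult)
  qed
  define K' where "K' = max K 1"
  define R where "R = max (max R0 1) (sqrt (\<bar>ln K' - ln M\<bar> / \<epsilon>))"
  have R1: "R \<ge> 1" "R \<ge> R0" unfolding R_def by auto
  have "R \<ge> sqrt (\<bar>ln K' - ln M\<bar> / \<epsilon>)" unfolding R_def by auto
  hence "R^2 \<ge> \<bar>ln K' - ln M\<bar> / \<epsilon>"
    by (metis abs_ge_zero divide_nonneg_pos eps real_sqrt_le_iff sqrt_le_D)
  hence "\<epsilon> * R^2 \<ge> \<bar>ln K' - ln M\<bar>" using eps by (simp add: field_simps)
  hence "ln K' - \<epsilon> * R^2 \<le> ln M" by linarith
  hence "exp (ln K' - \<epsilon> * R^2) \<le> M" using M0 by (metis exp_le_cancel_iff exp_ln)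
  hence KR: "K' * exp (- \<epsilon> * R^2) \<le> M"
    by (simp add: K'_def exp_diff exp_minus field_simps)
  have K'0: "K' > 0" unfolding K'_def by auto
  define a where "a = Complex (x0 - R) (- y)"
  define b where "b = Complex (x0 + R) y"
  have Hhol: "H holomorphic_on UNIV" unfolding H_def
    by (intro holomorphic_intros holomorphic_on_subset[OF G]) auto
  have "norm (H (complex_of_real x0)) \<le> M * exp (\<epsilon> * y^2)"
  proof (rule maximum_modulus_frontier[of H "cbox a b"])
    show "H holomorphic_on interior (cbox a b)" using Hhol by (rule holomorphic_on_subset) auto
    show "continuous_on (closure (cbox a b)) H"
      using Hhol holomorphic_on_imp_continuous_on continuous_on_subset by blast
    show "bounded (cbox a b)" by simp
    show "complex_of_real x0 \<in> cbox a b"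
      using R1 y by (auto simp: cbox_complex_eq a_def b_def)
  next
    fix z assume "z \<in> frontier (cbox a b)"
    hence "z \<in> cbox a b" "z \<notin> box a b" unfolding frontier_cbox by auto
    hence zc: "\<bar>Re z - x0\<bar> \<le> R" "\<bar>Im z\<bar> \<le> y" and zb: "\<bar>Re z - x0\<bar> = R \<or> \<bar>Im z\<bar> = y"
      by (auto simp: cbox_complex_eq box_complex_eq a_def b_def)
    show "norm (H z) \<le> M * exp (\<epsilon> * y^2)"
    proof (cases "\<bar>Im z\<bar> = y")
      case True
      have "norm (H z) = norm (G z) * exp (\<epsilon> * ((Im z)^2 - (Re z - x0)^2))" by (rule nH)
      also have "\<dots> \<le> M * exp (\<epsilon> * y^2)"
      proof (rule mult_mono)
        show "norm (G z) \<le> M" using M True by blast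
        have "(Im z)^2 = y^2" using True by (metis power2_abs)
        then show "exp (\<epsilon> * ((Im z)^2 - (Re z - x0)^2)) \<le> exp (\<epsilon> * y^2)"
          using eps by (simp add: mult_left_mono)
      qed (use M0 in auto)
      finally show ?thesis .
    next
      case False
      hence zR: "\<bar>Re z - x0\<bar> = R" using zb by auto
      have "norm (G z) \<le> K'" using K[OF zc(2)] zR R1 unfolding K'_def by force
      have "(Im z)^2 \<le> y^2" using zc(2) by (metis abs_ge_zero power2_abs power_mono)
      moreover have "(Re z - x0)^2 = R^2" using zR by (metis power2_abs)
      ultimately have Eb: "exp (\<epsilon> * ((Im z)^2 - (Re z - x0)^2)) \<le> exp (\<epsilon> * y^2) * exp (- \<epsilon> * R^2)"
        using eps by (simp add: mult_left_mono algebra_simps flip: exp_add)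
      have "norm (H z) = norm (G z) * exp (\<epsilon> * ((Im z)^2 - (Re z - x0)^2))" by (rule nH)
      also have "\<dots> \<le> K' * (exp (\<epsilon> * y^2) * exp (- \<epsilon> * R^2))"
        using Eb K'0 \<open>norm (G z) \<le> K'\<close> by (intro mult_mono) auto
      also have "\<dots> = (K' * exp (- \<epsilon> * R^2)) * exp (\<epsilon> * y^2)" by simp
      also have "\<dots> \<le> M * exp (\<epsilon> * y^2)" using KR by simp
      finally show ?thesis .
    qed
  qed
  moreover have "H (complex_of_real x0) = G (complex_of_real x0)" by (simp add: H_def)
  ultimately show ?thesis by simp
qed

lemma strip_max:
  fixes G :: "complex \<Rightarrow> complex"
  assumes G: "G holomorphic_on UNIV" and y: "y > 0"
   and K: "\<And>z. \<bar>Im z\<bar> \<le> y \<Longrightarrow> \<bar>Re z - x0\<bar> \<ge> R0 \<Longrightarrow> norm (G z) \<le> K"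
   and M: "\<And>z. \<bar>Im z\<bar> = y \<Longrightarrow> norm (G z) \<le> M"
   and M0: "M > 0"
  shows "norm (G (complex_of_real x0)) \<le> M"
proof -
  have lim: "((\<lambda>e. M * exp (e * y^2)) \<longlongrightarrow> M * exp (0 * y^2)) (at_right 0)"
    by (intro tendsto_intros)
  have ev: "\<forall>\<^sub>F e in at_right 0. norm (G (complex_of_real x0)) \<le> M * exp (e * y^2)"
    by (rule eventually_mono[OF eventually_at_right_less]) (use strip_max_eps[OF G y K M M0] in auto)
  have "norm (G (complex_of_real x0)) \<le> M * exp (0 * y^2)"
    by (rule tendsto_lowerbound[OF lim ev]) simp
  then show ?thesis by simp
qed

lemma final_step:
  fixes a b c :: real and n :: nat
  assumes bound: "\<And>y. y > 0 \<Longrightarrow> c \<le> (b - a) ^ n * (exp (y * \<sigma> y) / y ^ n)"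
  and ab: "a \<le> b"
  shows "c \<le> (b - a) ^ n * (INF y\<in>{0<..}. exp (y * \<sigma> y) / y ^ n)"
  proof (cases "(b - a) ^ n = 0")
    case True
    have "c \<le> (b - a) ^ n * (exp (1 * \<sigma> 1) / 1 ^ n)"
      by (rule bound[of 1]) (rule zero_less_one)
    hence h: "c \<le> 0" unfolding True mult_zero_left .
    have "(b - a) ^ n * (INF y\<in>{0<..}. exp (y * \<sigma> y) / y ^ n) = 0"
      using True by simp
    with h show ?thesis by (simp only:)
  next
    case False
    have "0 \<le> (b - a) ^ n" using ab by simp
    hence pos: "(b - a) ^ n > 0" using False by linarith
    have "c / (b - a) ^ n \<le> (INF y\<in>{0<..}. exp (y * \<sigma> y) / y ^ n)"
    proof (rule cINF_greatest)
      show "{0<..} \<noteq> ({} :: real set)" by auto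
      fix y :: real assume "y \<in> {0<..}"
      then show "c / (b - a) ^ n \<le> exp (y * \<sigma> y) / y ^ n"
        using bound[of y] pos by (simp add: pos_divide_le_eq mult.commute)
    qed
    then show ?thesis using pos by (simp add: pos_divide_le_eq mult.commute)
  qed

theorem lemma3p4:
  fixes \<sigma> :: "real \<Rightarrow> real" and F :: "complex \<Rightarrow> complex" and a b x :: real and n :: nat
  assumes "mono_on {0<..} \<sigma>"
    and "filterlim \<sigma> at_top at_top"
    and "F holomorphic_on UNIV"
    and "\<forall>z. norm (F z) \<le> exp (\<bar>Im z\<bar> * \<sigma> \<bar>Im z\<bar>)"
    and "has_n_zeros_on F n {a..b}"
    and "x \<in> {a..b}"
  shows "norm (F (complex_of_real x)) \<le> (b - a) ^ n * (INF y\<in>{0<..}. exp (y * \<sigma> y) / y ^ n)"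
proof -
  obtain xs G where xs: "length xs = n" "set xs \<subseteq> {a..b}" and Ghol: "G holomorphic_on UNIV"
    and FG: "\<And>z. F z = (\<Prod>x\<leftarrow>xs. z - complex_of_real x) * G z"
    using assms(5) unfolding has_n_zeros_on_def by blast
  define P where "P z = (\<Prod>x\<leftarrow>xs. z - complex_of_real x)" for z
  have FPG: "norm (F z) = norm (P z) * norm (G z)" for z by (simp add: FG P_def norm_mult)
  have ab: "a \<le> x" "x \<le> b" using assms(6) by auto
  have bound: "norm (F (complex_of_real x)) \<le> (b - a) ^ n * (exp (y * \<sigma> y) / y ^ n)" if y: "y > 0" for y
  proof -
    define M where "M = exp (y * \<sigma> y) / y ^ n"
    have M0: "M > 0" using y by (simp add: M_def)
    have Kb: "norm (G z) \<le> exp (max 0 (y * \<sigma> y))"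
      if z: "\<bar>Im z\<bar> \<le> y" "\<bar>Re z - x\<bar> \<ge> b - a + 1" for z
    proof -
      have "norm (P z) \<ge> 1 ^ length xs" unfolding P_def
      proof (rule prod_norm_lower)
        fix t assume "t \<in> set xs"
        hence t: "a \<le> t" "t \<le> b" using xs by auto
        have "1 \<le> \<bar>Re z - t\<bar>" using z t ab by linarith
        also have "\<dots> \<le> norm (z - complex_of_real t)" using abs_Re_le_cmod[of "z - complex_of_real t"] by simp
        finally show "1 \<le> norm (z - complex_of_real t)" .
      qed simp
      hence P1: "norm (P z) \<ge> 1" by simp
      have "1 * norm (G z) \<le> norm (P z) * norm (G z)"
        by (rule mult_right_mono) (use P1 in auto)
      hence "norm (G z) \<le> norm (F z)" by (simp add: FPG)
      also have "\<dots> \<le> exp (\<bar>Im z\<bar> * \<sigma> \<bar>Im z\<bar>)" using assms(4) by blast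
      also have "\<dots> \<le> exp (max 0 (y * \<sigma> y))"
      proof (cases "Im z = 0")
        case False
        hence "\<sigma> \<bar>Im z\<bar> \<le> \<sigma> y" using assms(1) z y by (auto intro: mono_onD)
        hence "\<bar>Im z\<bar> * \<sigma> \<bar>Im z\<bar> \<le> \<bar>Im z\<bar> * \<sigma> y" by (simp add: mult_left_mono)
        also have "\<dots> \<le> max 0 (y * \<sigma> y)"
        proof (cases "\<sigma> y \<ge> 0")
          case True then show ?thesis using z by (simp add: mult_right_mono le_max_iff_disj)
        next
          case False then show ?thesis by (simp add: mult_nonneg_nonpos le_max_iff_disj)
        qed
        finally show ?thesis by simp
      qed simp
      finally show ?thesis .
    qed
    have Mb: "norm (G z) \<le> M" if z: "\<bar>Im z\<bar> = y" for z
    proof -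
      have "norm (P z) \<ge> y ^ length xs" unfolding P_def
      proof (rule prod_norm_lower)
        fix t assume "t \<in> set xs"
        have "y = \<bar>Im (z - complex_of_real t)\<bar>" using z by simp
        also have "\<dots> \<le> norm (z - complex_of_real t)" by (rule abs_Im_le_cmod)
        finally show "y \<le> norm (z - complex_of_real t)" .
      qed (use y in simp)
      hence Py: "norm (P z) \<ge> y ^ n" using xs by simp
      have yn: "y ^ n > 0" using y by simp
      have "y ^ n * norm (G z) \<le> norm (P z) * norm (G z)" using Py by (simp add: mult_right_mono)
      also have "\<dots> = norm (F z)" by (simp add: FPG)
      also have "\<dots> \<le> exp (\<bar>Im z\<bar> * \<sigma> \<bar>Im z\<bar>)" using assms(4) by blast
      also have "\<dots> = exp (y * \<sigma> y)" using z by simp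
      finally show ?thesis unfolding M_def using yn by (simp add: field_simps)
    qed
    have Gx: "norm (G (complex_of_real x)) \<le> M"
      by (rule strip_max[OF Ghol y Kb Mb M0]) auto
    have Px: "norm (P (complex_of_real x)) \<le> (b - a) ^ length xs" unfolding P_def
    proof (rule prod_norm_upper)
      fix t assume "t \<in> set xs"
      hence t: "a \<le> t" "t \<le> b" using xs by auto
      have "norm (complex_of_real x - complex_of_real t) = \<bar>x - t\<bar>"
        by (metis norm_of_real of_real_diff)
      also have "\<dots> \<le> b - a" using t ab by linarith
      finally show "norm (complex_of_real x - complex_of_real t) \<le> b - a" .
    qed
    have "norm (F (complex_of_real x)) = norm (P (complex_of_real x)) * norm (G (complex_of_real x))" by (rule FPG)
    also have "\<dots> \<le> (b - a) ^ n * M" using Px Gx xs ab by (intro mult_mono) auto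
    finally show ?thesis unfolding M_def .
  qed
  show ?thesis by (rule final_step[OF bound]) (use ab in auto)
qed

end
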